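(* Let $k\ge 1$ be an integer. If a graph $G$ has at most $3k$ vertices, then $m(G)\le k+1$.
   Context: All graphs are finite, simple and undirected. A list assignment $L$ for a graph $G$ assigns to each vertex $v$ a set $L(v)$ of colors; an $L$-coloring is a proper vertex coloring $c$ of $G$ with $c(v)\in L(v)$ for every vertex $v$. A $k$-list assignment is a list assignment with $|L(v)|=k$ for all $v$. $G$ is uniquely $k$-list colorable (U$k$LC) if there exists a $k$-list assignment $L$ such that $G$ has exactly one $L$-coloring. $G$ has property $M(k)$ if it is not U$k$LC, i.e. for every $k$-list assignment $L$, $G$ has either no $L$-coloring or at least two $L$-colorings. The m-number $m(G)$ is the least integer $k\ge 1$ such that $G$ has property $M(k)$. (Every U$k$LC graph is also U$(k-1)$LC, so $G$ is U$k$LC iff $k<m(G)$.) *)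

theory Defs
  imports "HOL-Library.FuncSet"
begin

definition simple_graph :: "'a set \<Rightarrow> ('a \<Rightarrow> 'a \<Rightarrow> bool) \<Rightarrow> bool" where
  "simple_graph V E \<longleftrightarrow> finite V \<and> (\<forall>u v. E u v \<longrightarrow> u \<in> V \<and> v \<in> V)
     \<and> (\<forall>u v. E u v \<longrightarrow> E v u) \<and> (\<forall>v. \<not> E v v)"

text \<open>An L-coloring: a proper coloring c with c v in L v for all v in V
  (as an extensional function on V, so distinct colorings are distinct functions).\<close>
definition L_coloring :: "'a set \<Rightarrow> ('a \<Rightarrow> 'a \<Rightarrow> bool) \<Rightarrow> ('a \<Rightarrow> nat set) \<Rightarrow> ('a \<Rightarrow> nat) \<Rightarrow> bool" where
  "L_coloring V E L c \<longleftrightarrow> c \<in> (\<Pi>\<^sub>E v\<in>V. L v) \<and> (\<forall>u\<in>V. \<forall>v\<in>V. E u v \<longrightarrow> c u \<noteq> c v)"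

definition k_list_assignment :: "'a set \<Rightarrow> nat \<Rightarrow> ('a \<Rightarrow> nat set) \<Rightarrow> bool" where
  "k_list_assignment V k L \<longleftrightarrow> (\<forall>v\<in>V. finite (L v) \<and> card (L v) = k)"

definition UkLC :: "'a set \<Rightarrow> ('a \<Rightarrow> 'a \<Rightarrow> bool) \<Rightarrow> nat \<Rightarrow> bool" where
  "UkLC V E k \<longleftrightarrow> (\<exists>L. k_list_assignment V k L \<and> (\<exists>!c. L_coloring V E L c))"

definition property_M :: "'a set \<Rightarrow> ('a \<Rightarrow> 'a \<Rightarrow> bool) \<Rightarrow> nat \<Rightarrow> bool" where
  "property_M V E k \<longleftrightarrow> \<not> UkLC V E k"

definition m_number :: "'a set \<Rightarrow> ('a \<Rightarrow> 'a \<Rightarrow> bool) \<Rightarrow> nat" where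
  "m_number V E = (LEAST k. k \<ge> 1 \<and> property_M V E k)"

end

theory Submission
  imports Defs
begin

lemma periodic_mult:
  assumes "(f ^^ m) x = x"
  shows "(f ^^ (m * k)) x = x"
proof (induction k)
  case 0 then show ?case by simp
next
  case (Suc k)
  have "(f ^^ (m * Suc k)) x = (f ^^ m) ((f ^^ (m * k)) x)"
    by (simp add: funpow_add)
  also have "\<dots> = x" using Suc assms by simp
  finally show ?case .
qed

lemma funpow_maps:
  assumes "\<forall>x\<in>C. f x \<in> C" "x \<in> C"
  shows "(f ^^ i) x \<in> C"
  using assms by (induction i) auto

lemma cycle_exists:
  fixes f :: "'b \<Rightarrow> 'b"
  assumes fin: "finite C" and ne: "C \<noteq> {}" and maps: "\<forall>x\<in>C. f x \<in> C"
  shows "\<exists>x\<in>C. \<exists>m>0. (f ^^ m) x = x"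
proof -
  obtain a0 where a0: "a0 \<in> C" using ne by auto
  define g where "g i = (f ^^ i) a0" for i
  have gC: "g ` {..card C} \<subseteq> C" using funpow_maps[OF maps a0] g_def by auto
  have "\<not> inj_on g {..card C}"
  proof
    assume "inj_on g {..card C}"
    then have "card (g ` {..card C}) = card C + 1" by (simp add: card_image)
    moreover have "card (g ` {..card C}) \<le> card C" using card_mono[OF fin gC] .
    ultimately show False by simp
  qed
  then obtain i j where ij: "i \<le> card C" "j \<le> card C" "i \<noteq> j" "g i = g j"
    unfolding inj_on_def by auto
  have "\<exists>i j. i < j \<and> g i = g j"
  proof (cases "i < j")
    case True then show ?thesis using ij by blast
  next
    case False then have "j < i" using ij(3) by simp
    then show ?thesis using ij(4) by metis
  qed
  then obtain i j where ij2: "i < j" "g i = g j" by blast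
  define x where "x = g i"
  have "(f ^^ (j - i)) x = (f ^^ ((j - i) + i)) a0"
    unfolding x_def g_def by (simp add: funpow_add)
  also have "\<dots> = x" using ij2 unfolding x_def g_def by simp
  finally have "(f ^^ (j - i)) x = x" .
  moreover have "x \<in> C" unfolding x_def g_def using funpow_maps[OF maps a0] .
  ultimately show ?thesis using ij2 by (metis zero_less_diff)
qed

definition uniqP :: "'a set \<Rightarrow> ('a \<Rightarrow> nat) \<Rightarrow> ('a \<Rightarrow> nat set) \<Rightarrow> bool" where
  "uniqP V c L \<longleftrightarrow> (\<forall>\<sigma>. (\<forall>v\<in>V. \<sigma> (c v) \<in> L v) \<and> inj_on \<sigma> (c ` V) \<longrightarrow> (\<forall>b\<in>c ` V. \<sigma> b = b))"

lemma lemmaA: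
  assumes fin: "finite V" and ne: "V \<noteq> {}" and cL: "\<forall>v\<in>V. c v \<in> L v"
    and u: "uniqP V c L"
  shows "\<exists>a\<in>c ` V. \<forall>b\<in>c ` V. b \<noteq> a \<longrightarrow> (\<exists>v\<in>V. c v = a \<and> b \<notin> L v)"
proof (rule ccontr)
  assume "\<not> ?thesis"
  then have "\<forall>a\<in>c ` V. \<exists>b. b \<in> c ` V \<and> b \<noteq> a \<and> (\<forall>v\<in>V. c v = a \<longrightarrow> b \<in> L v)" by blast
  then have "\<exists>f. \<forall>a\<in>c ` V. f a \<in> c ` V \<and> f a \<noteq> a \<and> (\<forall>v\<in>V. c v = a \<longrightarrow> f a \<in> L v)"
    by (rule bchoice)
  then obtain f where f: "\<forall>a\<in>c ` V. f a \<in> c ` V \<and> f a \<noteq> a \<and> (\<forall>v\<in>V. c v = a \<longrightarrow> f a \<in> L v)"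
    by (elim exE)
  define C where "C = c ` V"
  have finC: "finite C" using fin C_def by simp
  have neC: "C \<noteq> {}" using ne C_def by simp
  have maps: "\<forall>x\<in>C. f x \<in> C" using f C_def by simp
  define S where "S = {x\<in>C. \<exists>m>0. (f ^^ m) x = x}"
  obtain x0 where x0: "x0 \<in> S" using cycle_exists[OF finC neC maps] S_def by auto
  have Smaps: "f x \<in> S" if "x \<in> S" for x
  proof -
    have "x \<in> C \<and> (\<exists>m>0. (f ^^ m) x = x)" using that unfolding S_def by simp
    then obtain m where m: "m > 0" "(f ^^ m) x = x" "x \<in> C" by (elim conjE exE) simp
    have "(f ^^ m) (f x) = f x" by (simp only: funpow_swap1[symmetric] m(2))
    moreover have "f x \<in> C" using maps m(3) by blast
    ultimately show ?thesis using m(1) unfolding S_def by auto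
  qed
  have Sinj: "inj_on f S"
  proof
    fix x y assume xy: "x \<in> S" "y \<in> S" "f x = f y"
    have "\<exists>p>0. (f ^^ p) x = x" using xy(1) unfolding S_def by simp
    then obtain p where p: "p > 0" "(f ^^ p) x = x" by (elim exE conjE) simp
    have "\<exists>q>0. (f ^^ q) y = y" using xy(2) unfolding S_def by simp
    then obtain q where q: "q > 0" "(f ^^ q) y = y" by (elim exE conjE) simp
    have px: "(f ^^ (p * q)) x = x" using periodic_mult[OF p(2)] .
    have qy: "(f ^^ (p * q)) y = y" using periodic_mult[OF q(2), of p] by (simp add: mult.commute)
    obtain r where r: "p * q = Suc r" using p q by (metis gr0_conv_Suc nat_0_less_mult_iff)
    have "x = (f ^^ r) (f x)" using px unfolding r by (simp only: funpow_Suc_right comp_apply)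
    also have "\<dots> = (f ^^ r) (f y)" using xy by simp
    also have "\<dots> = y" using qy unfolding r by (simp only: funpow_Suc_right comp_apply)
    finally show "x = y" .
  qed
  define \<sigma> where "\<sigma> y = (if y \<in> S then f y else y)" for y
  have h1: "\<forall>v\<in>V. \<sigma> (c v) \<in> L v"
  proof
    fix v assume v: "v \<in> V"
    show "\<sigma> (c v) \<in> L v"
    proof (cases "c v \<in> S")
      case True then show ?thesis using f v \<sigma>_def by auto
    next
      case False then show ?thesis using cL v \<sigma>_def by auto
    qed
  qed
  have h2: "inj_on \<sigma> (c ` V)"
  proof
    fix x y assume xy: "x \<in> c ` V" "y \<in> c ` V" "\<sigma> x = \<sigma> y"
    show "x = y"
    proof (cases "x \<in> S")
      case True
      show ?thesis
      proof (cases "y \<in> S")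
        case True
        then have "f x = f y" using \<open>x \<in> S\<close> xy(3) \<sigma>_def by simp
        then show ?thesis using \<open>x \<in> S\<close> \<open>y \<in> S\<close> Sinj by (simp add: inj_on_def)
      next
        case False
        then have "f x = y" using \<open>x \<in> S\<close> xy(3) \<sigma>_def by simp
        then show ?thesis using \<open>x \<in> S\<close> \<open>y \<notin> S\<close> Smaps by blast
      qed
    next
      case False
      show ?thesis
      proof (cases "y \<in> S")
        case True
        then have "x = f y" using \<open>x \<notin> S\<close> xy(3) \<sigma>_def by simp
        then show ?thesis using \<open>x \<notin> S\<close> \<open>y \<in> S\<close> Smaps by blast
      next
        case False
        then show ?thesis using \<open>x \<notin> S\<close> xy(3) \<sigma>_def by simp
      qed
    qed
  qed
  have "\<forall>b\<in>c ` V. \<sigma> b = b" using u[unfolded uniqP_def, rule_format, of \<sigma>] h1 h2 by blast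
  moreover have "x0 \<in> c ` V" using x0 S_def C_def by auto
  ultimately have "f x0 = x0" using x0 \<sigma>_def by auto
  moreover have "f x0 \<noteq> x0" using f \<open>x0 \<in> c ` V\<close> by auto
  ultimately show False by simp
qed


lemma card_diff_one: "finite A \<Longrightarrow> card A - 1 \<le> card (A - {a})"
  by (cases "a \<in> A") auto

lemma main_lemma:
  fixes V :: "'a set" and c :: "'a \<Rightarrow> nat"
  assumes "finite V" "V \<noteq> {}" "\<forall>v\<in>V. c v \<in> L v" "\<forall>v\<in>V. L v \<subseteq> c ` V"
    "\<forall>v\<in>V. finite (L v) \<and> s \<le> card (L v)" "uniqP V c L"
  shows "3 * s \<le> card V + 2 \<and> card (c ` V) + s \<le> card V + 1"
  using assms
proof (induction "card V" arbitrary: V L s rule: less_induct)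
  case less
  note fin = less.prems(1) and ne = less.prems(2) and cL = less.prems(3)
    and LC = less.prems(4) and Ls = less.prems(5) and u = less.prems(6)
  have tn: "card (c ` V) \<le> card V" using card_image_le[OF fin] .
  have n1: "card V \<ge> 1" using fin ne by (simp add: Suc_leI card_gt_0_iff)
  obtain a where a: "a \<in> c ` V" and aP: "\<forall>b\<in>c ` V. b \<noteq> a \<longrightarrow> (\<exists>v\<in>V. c v = a \<and> b \<notin> L v)"
    using lemmaA[OF fin ne cL u] by blast
  define P where "P = {v\<in>V. c v = a}"
  define V' where "V' = V - P"
  have PV: "P \<subseteq> V" unfolding P_def by auto
  have finP: "finite P" using fin PV finite_subset by blast
  have Pne: "P \<noteq> {}" using a unfolding P_def by auto
  have ncard: "card V = card V' + card P"
    unfolding V'_def using card_Diff_subset[OF finP PV] card_mono[OF fin PV] by simp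
  have cV': "c ` V' = c ` V - {a}" unfolding V'_def P_def by auto
  have tcard: "card (c ` V) = card (c ` V') + 1"
  proof -
    have "card (c ` V) > 0" using a fin by (auto simp: card_gt_0_iff)
    then show ?thesis using cV' a fin by (simp add: card_Diff_singleton)
  qed
  have LxP: "L x \<subseteq> {a}" if "P = {x}" for x
  proof
    fix b assume b: "b \<in> L x"
    have xV: "x \<in> V" "c x = a" using that unfolding P_def by auto
    have "b \<in> c ` V" using LC xV b by auto
    show "b \<in> {a}"
    proof (rule ccontr)
      assume "b \<notin> {a}"
      then obtain v where "v \<in> V" "c v = a" "b \<notin> L v" using aP \<open>b \<in> c ` V\<close> by auto
      then have "v = x" using that unfolding P_def by auto
      then show False using b \<open>b \<notin> L v\<close> by simp
    qed
  qed
  show ?case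
  proof (cases "s = 0")
    case True then show ?thesis using tn by simp
  next
    case s0: False
    show ?thesis
    proof (cases "V' = {}")
      case True
      then have "c ` V = {a}" using cV' a by auto
      then have "P = V" using True PV unfolding V'_def by auto
      obtain v where v: "v \<in> V" using ne by auto
      have "L v \<subseteq> {a}" using LC v \<open>c ` V = {a}\<close> by auto
      then have "card (L v) \<le> 1" using card_mono[of "{a}" "L v"] by simp
      then have "s \<le> 1" using Ls v by force
      then show ?thesis using n1 \<open>c ` V = {a}\<close> by simp
    next
      case V'ne: False
      show ?thesis
      proof (cases "card P = 1")
        case True
        then obtain x where x: "P = {x}" by (auto simp: card_1_singleton_iff)
        have xV: "x \<in> V" using x PV by auto
        have "card (L x) \<le> 1" using LxP[OF x] card_mono[of "{a}" "L x"] by simp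
        then have "s \<le> 1" using Ls xV by force
        then show ?thesis using n1 tn by simp
      next
        case False
        then have P2: "card P \<ge> 2" proof -
          have "card P > 0" using Pne finP by (simp add: card_gt_0_iff)
          then show ?thesis using False by simp
        qed
        define L' where "L' v = L v - {a}" for v
        have lt: "card V' < card V" using ncard P2 by simp
        have fin': "finite V'" using fin unfolding V'_def by simp
        have cL': "\<forall>v\<in>V'. c v \<in> L' v" using cL unfolding V'_def P_def L'_def by auto
        have LC': "\<forall>v\<in>V'. L' v \<subseteq> c ` V'"
        proof
          fix v assume "v \<in> V'"
          then have "v \<in> V" unfolding V'_def by simp
          then show "L' v \<subseteq> c ` V'" unfolding cV' L'_def using LC by auto
        qed
        have Ls': "\<forall>v\<in>V'. finite (L' v) \<and> s - 1 \<le> card (L' v)"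
        proof
          fix v assume v: "v \<in> V'"
          then have "v \<in> V" unfolding V'_def by simp
          then have "finite (L v)" "s \<le> card (L v)" using Ls by auto
          then show "finite (L' v) \<and> s - 1 \<le> card (L' v)"
            unfolding L'_def using card_diff_one[of "L v" a] by simp
        qed
        have u': "uniqP V' c L'"
          unfolding uniqP_def
        proof (intro allI impI)
          fix \<sigma>' assume h: "(\<forall>v\<in>V'. \<sigma>' (c v) \<in> L' v) \<and> inj_on \<sigma>' (c ` V')"
          define \<sigma> where "\<sigma> = \<sigma>'(a := a)"
          have h1: "\<forall>v\<in>V. \<sigma> (c v) \<in> L v"
          proof
            fix v assume v: "v \<in> V"
            show "\<sigma> (c v) \<in> L v"
            proof (cases "c v = a")
              case True then show ?thesis using cL v \<sigma>_def by auto
            next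
              case False
              then have "v \<in> V'" using v unfolding V'_def P_def by auto
              then show ?thesis using h False \<sigma>_def L'_def by auto
            qed
          qed
          have nota: "\<sigma>' b \<noteq> a" if "b \<in> c ` V'" for b
            using that h L'_def by auto
          have h2: "inj_on \<sigma> (c ` V)"
          proof
            fix x y assume xy: "x \<in> c ` V" "y \<in> c ` V" "\<sigma> x = \<sigma> y"
            show "x = y"
            proof (cases "x = a")
              case True
              show ?thesis
              proof (rule ccontr)
                assume "x \<noteq> y"
                then have "y \<in> c ` V'" using xy True cV' by auto
                then show False using nota xy True \<sigma>_def \<open>x \<noteq> y\<close> by auto
              qed
            next
              case xa: False
              then have x': "x \<in> c ` V'" using xy cV' by auto
              show ?thesis
              proof (cases "y = a")
                case True
                then show ?thesis using nota[OF x'] xy xa \<sigma>_def by auto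
              next
                case False
                then have "y \<in> c ` V'" using xy cV' by auto
                then show ?thesis using x' h xy xa False \<sigma>_def by (auto simp: inj_on_def)
              qed
            qed
          qed
          have "\<forall>b\<in>c ` V. \<sigma> b = b" using u[unfolded uniqP_def, rule_format, of \<sigma>] h1 h2 by blast
          show "\<forall>b\<in>c ` V'. \<sigma>' b = b"
          proof
            fix b assume b: "b \<in> c ` V'"
            then have "b \<in> c ` V" "b \<noteq> a" using cV' by auto
            then show "\<sigma>' b = b" using \<open>\<forall>b\<in>c ` V. \<sigma> b = b\<close> \<sigma>_def by auto
          qed
        qed
        have IH: "3 * (s - 1) \<le> card V' + 2 \<and> card (c ` V') + (s - 1) \<le> card V' + 1"
          using less.hyps[OF lt fin' V'ne cL' LC' Ls' u'] .
        have I2: "card (c ` V) + s \<le> card V + 1" using IH ncard tcard P2 s0 by arith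
        show ?thesis
        proof (cases "card P \<ge> 3")
          case True then show ?thesis using IH ncard I2 s0 by arith
        next
          case False
          then have "card P = 2" using P2 by simp
          then obtain x y where xy: "x \<noteq> y" "P = {x, y}" by (auto simp: card_2_iff)
          have xyV: "x \<in> V" "y \<in> V" "c x = a" "c y = a" using xy PV unfolding P_def by auto
          have int: "L x \<inter> L y \<subseteq> {a}"
          proof
            fix b assume b: "b \<in> L x \<inter> L y"
            have "b \<in> c ` V" using LC xyV b by auto
            show "b \<in> {a}"
            proof (rule ccontr)
              assume "b \<notin> {a}"
              then obtain v where "v \<in> V" "c v = a" "b \<notin> L v" using aP \<open>b \<in> c ` V\<close> by auto
              then have "v = x \<or> v = y" using xy unfolding P_def by auto
              then show False using b \<open>b \<notin> L v\<close> by auto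
            qed
          qed
          have fx: "finite (L x)" "s \<le> card (L x)" using Ls xyV by auto
          have fy: "finite (L y)" "s \<le> card (L y)" using Ls xyV by auto
          have ci: "card (L x \<inter> L y) \<le> 1"
            using card_mono[OF _ int] by simp
          have cu: "card (L x \<union> L y) \<le> card (c ` V)"
            using card_mono[of "c ` V" "L x \<union> L y"] fin LC xyV by auto
          have "card (L x) + card (L y) = card (L x \<union> L y) + card (L x \<inter> L y)"
            using card_Un_Int[OF fx(1) fy(1)] .
          then have "2 * s \<le> card (c ` V) + 1" using fx fy ci cu by linarith
          then show ?thesis using I2 by linarith
        qed
      qed
    qed
  qed
qed

theorem theorem2p2:
  fixes V :: "'a set" and E :: "'a \<Rightarrow> 'a \<Rightarrow> bool" and k :: nat
  assumes "simple_graph V E" and "V \<noteq> {}" and "k \<ge> 1" and "card V \<le> 3 * k"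
  shows "m_number V E \<le> k + 1"
proof -
  have fin: "finite V" and irr: "\<forall>v. \<not> E v v" using assms(1) unfolding simple_graph_def by auto
  have "\<not> UkLC V E (k + 1)"
  proof
    assume "UkLC V E (k + 1)"
    then obtain L where kl: "k_list_assignment V (k + 1) L" and ex1: "\<exists>!c. L_coloring V E L c"
      unfolding UkLC_def by blast
    then obtain c where c: "L_coloring V E L c" and cu: "\<And>d. L_coloring V E L d \<Longrightarrow> d = c"
      by blast
    have cPi: "c \<in> (\<Pi>\<^sub>E v\<in>V. L v)" and cprop: "\<forall>u\<in>V. \<forall>v\<in>V. E u v \<longrightarrow> c u \<noteq> c v"
      using c unfolding L_coloring_def by auto
    have cL: "\<forall>v\<in>V. c v \<in> L v" using cPi by auto
    have LC: "\<forall>v\<in>V. L v \<subseteq> c ` V"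
    proof (intro ballI subsetI)
      fix v b assume v: "v \<in> V" and b: "b \<in> L v"
      show "b \<in> c ` V"
      proof (rule ccontr)
        assume nb: "b \<notin> c ` V"
        define d where "d = c(v := b)"
        have "L_coloring V E L d"
          unfolding L_coloring_def
        proof
          show "d \<in> (\<Pi>\<^sub>E v\<in>V. L v)" using cPi v b unfolding d_def by (auto simp: PiE_def extensional_def)
          show "\<forall>u\<in>V. \<forall>w\<in>V. E u w \<longrightarrow> d u \<noteq> d w"
          proof (intro ballI impI)
            fix u w assume uw: "u \<in> V" "w \<in> V" "E u w"
            then have "u \<noteq> w" using irr by auto
            then show "d u \<noteq> d w" using uw cprop nb unfolding d_def by auto
          qed
        qed
        then have "d = c" using cu by blast
        then have "b = c v" unfolding d_def by (metis fun_upd_same)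
        then show False using nb v by auto
      qed
    qed
    have Ls: "\<forall>v\<in>V. finite (L v) \<and> k + 1 \<le> card (L v)" using kl unfolding k_list_assignment_def by auto
    have u: "uniqP V c L"
      unfolding uniqP_def
    proof (intro allI impI)
      fix \<sigma> assume h: "(\<forall>v\<in>V. \<sigma> (c v) \<in> L v) \<and> inj_on \<sigma> (c ` V)"
      define d where "d = restrict (\<sigma> \<circ> c) V"
      have "L_coloring V E L d"
        unfolding L_coloring_def
      proof
        show "d \<in> (\<Pi>\<^sub>E v\<in>V. L v)" using h unfolding d_def by auto
        show "\<forall>u\<in>V. \<forall>w\<in>V. E u w \<longrightarrow> d u \<noteq> d w"
        proof (intro ballI impI)
          fix u w assume uw: "u \<in> V" "w \<in> V" "E u w"
          then have "c u \<noteq> c w" using cprop by auto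
          then have "\<sigma> (c u) \<noteq> \<sigma> (c w)" using h uw by (auto simp: inj_on_def)
          then show "d u \<noteq> d w" using uw unfolding d_def by auto
        qed
      qed
      then have dc: "d = c" using cu by blast
      show "\<forall>b\<in>c ` V. \<sigma> b = b"
      proof
        fix b assume "b \<in> c ` V"
        then obtain v where v: "v \<in> V" "b = c v" by auto
        have "d v = c v" using dc by simp
        then show "\<sigma> b = b" using v unfolding d_def by simp
      qed
    qed
    have "3 * (k + 1) \<le> card V + 2" using main_lemma[OF fin assms(2) cL LC Ls u] by blast
    then show False using assms(4) by simp
  qed
  then have "property_M V E (k + 1)" unfolding property_M_def by simp
  then show ?thesis unfolding m_number_def by (intro Least_le) simp
qed

end
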